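(* Under the standing assumptions below, let $\gamma>0$ be arbitrary (such that the $g$-proximal subproblems have minimizers) and let $\{(y^t,z^t,x^t)\}$ be generated by the PR splitting iteration. Then for every $t\ge 1$, \[ \mathcal{P}_\gamma(y^{t+1},z^{t+1},x^{t+1})-\mathcal{P}_\gamma(y^t,z^t,x^t)\le \frac12\left(-3\sigma+2L+\gamma L^2\right)\|y^{t+1}-y^t\|^2, \] and moreover $2\|y^t-z^t\|=\|x^t-x^{t-1}\|\le(1+\gamma L)\|y^{t+1}-y^t\|$.
   Context: Standing assumptions: $f:\mathbb{R}^n\to\mathbb{R}$ is differentiable and strongly convex with modulus at least $\sigma>0$ (i.e. $f-\frac{\sigma}{2}\|\cdot\|^2$ is convex), and $\nabla f$ is Lipschitz continuous with modulus at most $L>0$. The function $g:\mathbb{R}^n\to(-\infty,\infty]$ is proper and lower semicontinuous, and for the $\gamma>0$ used, the set $\operatorname{Argmin}_u\{\gamma g(u)+\frac12\|u-w\|^2\}$ is nonempty for every $w\in\mathbb{R}^n$. PR splitting iteration: given $x^0$ and $\gamma>0$, for $t=0,1,2,\dots$: $y^{t+1}=\operatorname{argmin}_y\{f(y)+\frac{1}{2\gamma}\|y-x^t\|^2\}$; $z^{t+1}\in\operatorname{Argmin}_z\{g(z)+\frac{1}{2\gamma}\|2y^{t+1}-x^t-z\|^2\}$ (any choice); $x^{t+1}=x^t+2(z^{t+1}-y^{t+1})$. Merit function: $\mathcal{P}_\gamma(y,z,x):=f(y)+g(z)-\frac{3}{2\gamma}\|y-z\|^2+\frac{1}{\gamma}\langle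 x-y,z-y\rangle$. *)

theory Defs
  imports "HOL-Analysis.Analysis"
begin

definition lsc_fun :: "('a::topological_space \<Rightarrow> ereal) \<Rightarrow> bool" where
  "lsc_fun g \<longleftrightarrow> (\<forall>x. g x \<le> Liminf (at x) g)"

definition proper_fun :: "('a \<Rightarrow> ereal) \<Rightarrow> bool" where
  "proper_fun g \<longleftrightarrow> (\<forall>x. g x \<noteq> -\<infinity>) \<and> (\<exists>x. g x \<noteq> \<infinity>)"

definition PR_merit ::
  "('a::real_inner \<Rightarrow> real) \<Rightarrow> ('a \<Rightarrow> ereal) \<Rightarrow> real \<Rightarrow> 'a \<Rightarrow> 'a \<Rightarrow> 'a \<Rightarrow> ereal" where
  "PR_merit f g \<gamma> y z x =
     ereal (f y) + g z
     + ereal (- 3 / (2 * \<gamma>) * (norm (y - z))\<^sup>2 + (1 / \<gamma>) * ((x - y) \<bullet> (z - y)))"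

end

theory Submission
  imports Defs
begin


lemma hd_lemma:
  fixes f :: "'a::euclidean_space \<Rightarrow> real"
  assumes "\<And>u. (f has_derivative (\<lambda>h. gradf u \<bullet> h)) (at u)"
  shows "((\<lambda>u. f u - \<sigma>/2 * (norm u)\<^sup>2) has_derivative (\<lambda>k. (gradf u - \<sigma> *\<^sub>R u) \<bullet> k)) (at u)"
proof -
  have "((\<lambda>u. f u - \<sigma>/2 * (u \<bullet> u)) has_derivative (\<lambda>k. gradf u \<bullet> k - \<sigma>/2 * (u \<bullet> k + k \<bullet> u))) (at u)"
    by (auto intro!: derivative_eq_intros assms)
  moreover have "(\<lambda>k. gradf u \<bullet> k - \<sigma>/2 * (u \<bullet> k + k \<bullet> u)) = (\<lambda>k. (gradf u - \<sigma> *\<^sub>R u) \<bullet> k)"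
    by (auto simp: inner_diff_left inner_commute algebra_simps)
  ultimately show ?thesis by (simp add: power2_norm_eq_inner)
qed

lemma sc_ineq:
  fixes f :: "'a::euclidean_space \<Rightarrow> real"
  assumes fd: "\<And>u. (f has_derivative (\<lambda>h. gradf u \<bullet> h)) (at u)"
    and cv: "convex_on UNIV (\<lambda>u. f u - \<sigma>/2 * (norm u)\<^sup>2)"
  shows "f b \<ge> f a + gradf a \<bullet> (b - a) + \<sigma>/2 * (norm (b-a))\<^sup>2"
proof -
  define h where "h = (\<lambda>u. f u - \<sigma>/2 * (norm u)\<^sup>2)"
  define \<phi> where "\<phi> = (\<lambda>s::real. h (a + s *\<^sub>R (b - a)))"
  have c\<phi>: "convex_on UNIV \<phi>"
  proof (rule convex_onI)
    fix t x y :: real assume "t > 0" "t < 1"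
    have e: "(1 - t) *\<^sub>R (a + x *\<^sub>R (b - a)) + t *\<^sub>R (a + y *\<^sub>R (b - a)) = a + ((1 - t) * x + t * y) *\<^sub>R (b - a)"
      by (simp add: algebra_simps)
    have "h ((1 - t) *\<^sub>R (a + x *\<^sub>R (b - a)) + t *\<^sub>R (a + y *\<^sub>R (b - a))) \<le> (1-t) * h (a + x *\<^sub>R (b - a)) + t * h (a + y *\<^sub>R (b - a))"
      using cv \<open>t > 0\<close> \<open>t < 1\<close> unfolding h_def by (intro convex_onD) auto
    then show "\<phi> ((1 - t) *\<^sub>R x + t *\<^sub>R y) \<le> (1 - t) * \<phi> x + t * \<phi> y"
      unfolding \<phi>_def using e by simp
  qed simp
  have hd: "(h has_derivative (\<lambda>k. (gradf a - \<sigma> *\<^sub>R a) \<bullet> k)) (at a)"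
    unfolding h_def by (rule hd_lemma[OF fd])
  have ad: "((\<lambda>s::real. a + s *\<^sub>R (b - a)) has_derivative (\<lambda>s. s *\<^sub>R (b - a))) (at 0)"
    by (auto intro!: derivative_eq_intros)
  have "((h \<circ> (\<lambda>s::real. a + s *\<^sub>R (b - a))) has_derivative ((\<lambda>k. (gradf a - \<sigma> *\<^sub>R a) \<bullet> k) \<circ> (\<lambda>s. s *\<^sub>R (b - a)))) (at 0)"
    by (rule diff_chain_at[OF ad]) (simp add: hd)
  hence "(\<phi> has_field_derivative ((gradf a - \<sigma> *\<^sub>R a) \<bullet> (b - a))) (at 0)"
    unfolding has_field_derivative_def \<phi>_def o_def
    by (simp add: mult.commute[of _ "(gradf a - \<sigma> *\<^sub>R a) \<bullet> (b - a)"])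
  hence "\<phi> 1 - \<phi> 0 \<ge> ((gradf a - \<sigma> *\<^sub>R a) \<bullet> (b - a)) * (1 - 0)"
    by (intro convex_on_imp_above_tangent[OF c\<phi>]) auto
  hence "h b - h a \<ge> (gradf a - \<sigma> *\<^sub>R a) \<bullet> (b - a)" by (simp add: \<phi>_def)
  thus ?thesis unfolding h_def
    by (simp add: power2_norm_eq_inner inner_diff_left inner_diff_right inner_commute algebra_simps)
qed



lemma id1:
  fixes u w :: "'a::real_inner"
  assumes "\<gamma> \<noteq> 0"
  shows "- 3 / (2 * \<gamma>) * (norm w)\<^sup>2 + (1 / \<gamma>) * ((u + 2 *\<^sub>R w) \<bullet> w)
     = (norm (u + w))\<^sup>2 / (2 * \<gamma>) - (norm u)\<^sup>2 / (2 * \<gamma>)"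
  using assms
  by (simp add: power2_norm_eq_inner inner_add_left inner_add_right inner_commute field_simps)

lemma id3:
  fixes G1 e H :: "'a::real_inner"
  assumes "\<gamma> \<noteq> 0"
  defines "d \<equiv> (1/2) *\<^sub>R (\<gamma> *\<^sub>R H + e)"
  shows "(norm (\<gamma> *\<^sub>R G1 - e + d))\<^sup>2 / (2 * \<gamma>) - (norm (\<gamma> *\<^sub>R G1))\<^sup>2 / (2 * \<gamma>)
     - (- 3 / (2 * \<gamma>) * (norm d)\<^sup>2 + (1 / \<gamma>) * ((\<gamma> *\<^sub>R G1 + e) \<bullet> d))
     = - (G1 \<bullet> e) + \<gamma> / 2 * (norm H)\<^sup>2"
  using assms unfolding d_def power2_norm_eq_inner
  by (simp add: inner_add_left inner_add_right inner_diff_left inner_diff_right inner_commute field_simps power2_eq_square)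



lemma yopt:
  fixes f :: "'a::euclidean_space \<Rightarrow> real"
  assumes fd: "\<And>u. (f has_derivative (\<lambda>h. gradf u \<bullet> h)) (at u)"
    and gp: "\<gamma> > 0"
    and am: "is_arg_min (\<lambda>v. f v + (norm (v - x0))\<^sup>2 / (2 * \<gamma>)) (\<lambda>_. True) y1"
  shows "\<gamma> *\<^sub>R gradf y1 = x0 - y1"
proof -
  let ?F = "\<lambda>v. f v + ((v - x0) \<bullet> (v - x0)) / (2 * \<gamma>)"
  have d: "(?F has_derivative (\<lambda>h. gradf y1 \<bullet> h + ((y1 - x0) \<bullet> h + h \<bullet> (y1 - x0)) / (2 * \<gamma>))) (at y1)"
    using gp by (auto intro!: derivative_eq_intros fd simp: field_simps)
  have mn: "\<forall>v\<in>UNIV. ?F y1 \<le> ?F v"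
    using am by (auto simp: is_arg_min_def power2_norm_eq_inner not_less)
  have z: "(\<lambda>h. gradf y1 \<bullet> h + ((y1 - x0) \<bullet> h + h \<bullet> (y1 - x0)) / (2 * \<gamma>)) = (\<lambda>v. 0)"
    by (rule differential_zero_maxmin[OF _ _ d, of UNIV]) (use mn in auto)
  define w where "w = \<gamma> *\<^sub>R gradf y1 - (x0 - y1)"
  have "gradf y1 \<bullet> w + ((y1 - x0) \<bullet> w + w \<bullet> (y1 - x0)) / (2 * \<gamma>) = 0"
    using fun_cong[OF z, of w] by simp
  hence "gradf y1 \<bullet> w + ((y1 - x0) \<bullet> w) / \<gamma> = 0"
    by (simp add: inner_commute)
  hence "\<gamma> * (gradf y1 \<bullet> w) + (y1 - x0) \<bullet> w = 0"
    using gp by (simp add: field_simps)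
  hence "w \<bullet> w = 0" unfolding w_def
    by (simp add: inner_diff_left inner_add_left algebra_simps)
  hence "w = 0" by simp
  thus ?thesis unfolding w_def by simp
qed

lemma gfin:
  assumes "proper_fun g"
    and "is_arg_min (\<lambda>v. g v + ereal (q v)) (\<lambda>_. True) z1"
  shows "\<exists>r. g z1 = ereal r"
proof -
  obtain u where u: "g u \<noteq> \<infinity>" using assms(1) unfolding proper_fun_def by auto
  have "\<not> (g u + ereal (q u) < g z1 + ereal (q z1))" using assms(2) by (auto simp: is_arg_min_def)
  hence "g z1 + ereal (q z1) \<le> g u + ereal (q u)" by simp
  moreover have "g u + ereal (q u) < \<infinity>" using u by simp
  ultimately have "g z1 \<noteq> \<infinity>" by auto
  moreover have "g z1 \<noteq> -\<infinity>" using assms(1) unfolding proper_fun_def by auto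
  ultimately show ?thesis by (cases "g z1") auto
qed

theorem mainTheorem2:
  fixes f :: "'a::euclidean_space \<Rightarrow> real"
    and gradf :: "'a \<Rightarrow> 'a"
    and g :: "'a \<Rightarrow> ereal"
    and \<sigma> L \<gamma> :: real
    and y z x :: "nat \<Rightarrow> 'a"
    and t :: nat
  assumes f_grad: "\<And>u. (f has_derivative (\<lambda>h. gradf u \<bullet> h)) (at u)"
    and \<sigma>_pos: "\<sigma> > 0"
    and f_strong: "convex_on UNIV (\<lambda>u. f u - \<sigma> / 2 * (norm u)\<^sup>2)"
    and L_pos: "L > 0"
    and grad_lip: "\<And>u v. norm (gradf u - gradf v) \<le> L * norm (u - v)"
    and g_proper: "proper_fun g"
    and g_lsc: "lsc_fun g"
    and \<gamma>_pos: "\<gamma> > 0"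
    and prox_ex: "\<And>w. \<exists>u. is_arg_min (\<lambda>u. ereal \<gamma> * g u + ereal ((norm (u - w))\<^sup>2 / 2)) (\<lambda>_. True) u"
    and y_step: "\<And>s. is_arg_min (\<lambda>v. f v + (norm (v - x s))\<^sup>2 / (2 * \<gamma>)) (\<lambda>_. True) (y (Suc s))"
    and z_step: "\<And>s. is_arg_min (\<lambda>v. g v + ereal ((norm (2 *\<^sub>R y (Suc s) - x s - v))\<^sup>2 / (2 * \<gamma>)))
                         (\<lambda>_. True) (z (Suc s))"
    and x_step: "\<And>s. x (Suc s) = x s + 2 *\<^sub>R (z (Suc s) - y (Suc s))"
    and t_ge: "t \<ge> 1"
  shows "PR_merit f g \<gamma> (y (Suc t)) (z (Suc t)) (x (Suc t)) - PR_merit f g \<gamma> (y t) (z t) (x t)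
           \<le> ereal ((- 3 * \<sigma> + 2 * L + \<gamma> * L\<^sup>2) / 2 * (norm (y (Suc t) - y t))\<^sup>2)
         \<and> 2 * norm (y t - z t) = norm (x t - x (t - 1))
         \<and> norm (x t - x (t - 1)) \<le> (1 + \<gamma> * L) * norm (y (Suc t) - y t)"
  proof -
  obtain n where tn: "t = Suc n" using t_ge by (cases t) auto
  define a where "a = y (Suc (Suc n))"
  define b where "b = y (Suc n)"
  define z0 where "z0 = z (Suc n)"
  define z1 where "z1 = z (Suc (Suc n))"
  define x0 where "x0 = x n"
  define x1 where "x1 = x (Suc n)"
  define x2 where "x2 = x (Suc (Suc n))"
  define G0 where "G0 = gradf b"
  define G1 where "G1 = gradf a"
  have gn: "\<gamma> \<noteq> 0" using \<gamma>_pos by simp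
  have hx1: "x1 = x0 + 2 *\<^sub>R (z0 - b)" unfolding x1_def x0_def z0_def b_def by (rule x_step)
  have hx2: "x2 = x1 + 2 *\<^sub>R (z1 - a)" unfolding x1_def x2_def z1_def a_def by (rule x_step)
  have hG1: "\<gamma> *\<^sub>R G1 = x1 - a" unfolding G1_def a_def x1_def
    by (rule yopt[OF f_grad \<gamma>_pos y_step])
  have hG0: "\<gamma> *\<^sub>R G0 = x0 - b" unfolding G0_def b_def x0_def
    by (rule yopt[OF f_grad \<gamma>_pos y_step])
  obtain g0 where g0: "g z0 = ereal g0" unfolding z0_def using gfin[OF g_proper z_step] by blast
  obtain g1 where g1: "g z1 = ereal g1" unfolding z1_def using gfin[OF g_proper z_step] by blast
  have zm: "g1 + (norm (2 *\<^sub>R a - x1 - z1))\<^sup>2 / (2 * \<gamma>) \<le> g0 + (norm (2 *\<^sub>R a - x1 - z0))\<^sup>2 / (2 * \<gamma>)"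
  proof -
    have "\<not> (g z0 + ereal ((norm (2 *\<^sub>R a - x1 - z0))\<^sup>2 / (2 * \<gamma>)) < g z1 + ereal ((norm (2 *\<^sub>R a - x1 - z1))\<^sup>2 / (2 * \<gamma>)))"
      using z_step[of "Suc n"] unfolding is_arg_min_def a_def x1_def z1_def by blast
    thus ?thesis using g0 g1 by simp
  qed
  have sc: "f b \<ge> f a + G1 \<bullet> (b - a) + \<sigma>/2 * (norm (b - a))\<^sup>2"
    unfolding G1_def by (rule sc_ineq[OF f_grad f_strong])
  have lip: "norm (G1 - G0) \<le> L * norm (a - b)" unfolding G1_def G0_def by (rule grad_lip)
  have dx: "x1 - x0 = \<gamma> *\<^sub>R (G1 - G0) + (a - b)"
    using hG1 hG0 by (simp add: algebra_simps)
  have c2: "2 * norm (b - z0) = norm (x1 - x0)"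
  proof -
    have "x1 - x0 = 2 *\<^sub>R (z0 - b)" using hx1 by simp
    thus ?thesis by (simp add: norm_minus_commute)
  qed
  have c3: "norm (x1 - x0) \<le> (1 + \<gamma> * L) * norm (a - b)"
  proof -
    have "norm (x1 - x0) \<le> norm (\<gamma> *\<^sub>R (G1 - G0)) + norm (a - b)"
      unfolding dx by (rule norm_triangle_ineq)
    also have "\<dots> = \<gamma> * norm (G1 - G0) + norm (a - b)" using \<gamma>_pos by simp
    also have "\<dots> \<le> \<gamma> * (L * norm (a - b)) + norm (a - b)"
      using lip \<gamma>_pos by (simp add: mult_left_mono)
    finally show ?thesis by (simp add: algebra_simps)
  qed
  define P1 where "P1 = - 3 / (2 * \<gamma>) * (norm (a - z1))\<^sup>2 + (1 / \<gamma>) * ((x2 - a) \<bullet> (z1 - a))"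
  define P0 where "P0 = - 3 / (2 * \<gamma>) * (norm (b - z0))\<^sup>2 + (1 / \<gamma>) * ((x1 - b) \<bullet> (z0 - b))"
  have i1: "P1 = (norm (2 *\<^sub>R a - x1 - z1))\<^sup>2 / (2 * \<gamma>) - (norm (x1 - a))\<^sup>2 / (2 * \<gamma>)"
  proof -
    have e1: "x2 - a = (x1 - a) + 2 *\<^sub>R (z1 - a)" using hx2 by (simp add: algebra_simps)
    have e2: "norm (2 *\<^sub>R a - x1 - z1) = norm ((x1 - a) + (z1 - a))"
      by (metis (no_types, lifting) add_diff_cancel_left diff_add_eq diff_diff_eq2 minus_diff_eq norm_minus_cancel scaleR_2)
    have e3: "norm (a - z1) = norm (z1 - a)" by (simp add: norm_minus_commute)
    show ?thesis unfolding P1_def e1 e2 e3 by (rule id1[OF gn])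
  qed
  define e where "e = a - b"
  define H where "H = G1 - G0"
  define d where "d = (1/2) *\<^sub>R (\<gamma> *\<^sub>R H + e)"
  have hd: "z0 - b = d" unfolding d_def H_def e_def
  proof -
    have "2 *\<^sub>R (z0 - b) = \<gamma> *\<^sub>R (G1 - G0) + (a - b)" using hx1 dx by simp
    hence "(1/2) *\<^sub>R (2 *\<^sub>R (z0 - b)) = (1/2) *\<^sub>R (\<gamma> *\<^sub>R (G1 - G0) + (a - b))" by simp
    thus "z0 - b = (1/2) *\<^sub>R (\<gamma> *\<^sub>R (G1 - G0) + (a - b))" by simp
  qed
  have i3: "(norm (2 *\<^sub>R a - x1 - z0))\<^sup>2 / (2 * \<gamma>) - (norm (x1 - a))\<^sup>2 / (2 * \<gamma>) - P0
      = - (G1 \<bullet> e) + \<gamma> / 2 * (norm H)\<^sup>2"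
  proof -
    have v1: "norm (2 *\<^sub>R a - x1 - z0) = norm (\<gamma> *\<^sub>R G1 - e + d)"
    proof -
      have "2 *\<^sub>R a - x1 - z0 = - (\<gamma> *\<^sub>R G1 - e + d)"
        using hG1 hd unfolding e_def by (simp add: algebra_simps scaleR_2)
      thus ?thesis by (metis norm_minus_cancel)
    qed
    have v2: "x1 - a = \<gamma> *\<^sub>R G1" using hG1 by simp
    have v3: "norm (b - z0) = norm d" using hd by (metis norm_minus_commute)
    have v4: "x1 - b = \<gamma> *\<^sub>R G1 + e" using hG1 unfolding e_def by (simp add: algebra_simps)
    show ?thesis unfolding P0_def v1 v2 v3 v4 hd d_def by (rule id3[OF gn])
  qed
  have sc': "f a - f b + G1 \<bullet> (b - a) \<le> - \<sigma>/2 * (norm (a - b))\<^sup>2"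
    using sc by (simp add: norm_minus_commute)
  have Hb: "(norm H)\<^sup>2 \<le> L\<^sup>2 * (norm (a - b))\<^sup>2"
    unfolding H_def using lip by (metis norm_ge_zero power_mono power_mult_distrib)
  have sL: "\<sigma> * (norm (a - b))\<^sup>2 \<le> L * (norm (a - b))\<^sup>2"
  proof (cases "a = b")
    case True thus ?thesis by simp
  next
    case False
    have sa: "f a \<ge> f b + G0 \<bullet> (a - b) + \<sigma>/2 * (norm (a - b))\<^sup>2"
      unfolding G0_def by (rule sc_ineq[OF f_grad f_strong])
    have "\<sigma> * (norm (a - b))\<^sup>2 \<le> (G1 - G0) \<bullet> (a - b)"
      using sa sc by (simp add: inner_diff_left inner_diff_right norm_minus_commute algebra_simps)
    also have "\<dots> \<le> norm (G1 - G0) * norm (a - b)" by (metis Cauchy_Schwarz_ineq2 abs_le_D1)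
    also have "\<dots> \<le> L * norm (a - b) * norm (a - b)" using lip by (simp add: mult_right_mono)
    finally show ?thesis by (simp add: power2_eq_square)
  qed
  have real1: "(f a + g1 + P1) - (f b + g0 + P0) \<le> (- 3 * \<sigma> + 2 * L + \<gamma> * L\<^sup>2) / 2 * (norm (a - b))\<^sup>2"
  proof -
    have "(f a + g1 + P1) - (f b + g0 + P0) \<le> f a - f b + (- (G1 \<bullet> e) + \<gamma> / 2 * (norm H)\<^sup>2)"
      using zm i1 i3 by linarith
    also have "\<dots> \<le> - \<sigma>/2 * (norm (a - b))\<^sup>2 + \<gamma> / 2 * (L\<^sup>2 * (norm (a - b))\<^sup>2)"
    proof -
      have "G1 \<bullet> (b - a) = - (G1 \<bullet> e)" unfolding e_def by (simp add: inner_diff_right)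
      moreover have "\<gamma> / 2 * (norm H)\<^sup>2 \<le> \<gamma> / 2 * (L\<^sup>2 * (norm (a - b))\<^sup>2)"
        using Hb \<gamma>_pos by (simp add: mult_left_mono)
      ultimately show ?thesis using sc' by linarith
    qed
    also have "\<dots> \<le> (- 3 * \<sigma> + 2 * L + \<gamma> * L\<^sup>2) / 2 * (norm (a - b))\<^sup>2"
      using sL by (simp add: field_simps)
    finally show ?thesis .
  qed
  have m1: "PR_merit f g \<gamma> (y (Suc t)) (z (Suc t)) (x (Suc t)) = ereal (f a + g1 + P1)"
    unfolding PR_merit_def tn a_def[symmetric] z1_def[symmetric] x2_def[symmetric] P1_def g1 by simp
  have m0: "PR_merit f g \<gamma> (y t) (z t) (x t) = ereal (f b + g0 + P0)"
    unfolding PR_merit_def tn b_def[symmetric] z0_def[symmetric] x1_def[symmetric] P0_def g0 by simp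
  show ?thesis
    unfolding m1 m0
    using real1 c2 c3
    unfolding tn a_def b_def z0_def x0_def x1_def by simp
qed

end
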